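(* For any $\delta\in(0,1)$ and any integers $0=k_0<k_1<\dots<k_t<n\le m$, there is a matrix $\mathbf A\in\mathbb R^{m\times n}$ such that for every $i\in\{1,\dots,t\}$ and every subset $S\subseteq\{1,\dots,n\}$ with $|S|=k_i$, \[ \frac{\mathrm{Er}_{\mathbf A}(S)}{\mathrm{OPT}_{k_i}}\ge(1-\delta)(k_i-k_{i-1}). \]
   Context: For $\mathbf A\in\mathbb R^{m\times n}$ with columns $\mathbf a_1,\dots,\mathbf a_n$ and $S\subseteq\{1,\dots,n\}$, $\mathbf P_S$ denotes the orthogonal projection onto $\mathrm{span}\{\mathbf a_i:i\in S\}$ and $\mathrm{Er}_{\mathbf A}(S)=\|\mathbf A-\mathbf P_S\mathbf A\|_F^2$. $\mathrm{OPT}_k=\min_{\mathrm{rank}(\mathbf B)=k}\|\mathbf A-\mathbf B\|_F^2$ (Frobenius norm). *)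

theory Defs
  imports "HOL-Analysis.Analysis"
begin

text \<open>Orthogonal projection of x onto a subspace V: the unique p in V with x - p orthogonal to V.\<close>
definition orth_proj :: "'a::euclidean_space set \<Rightarrow> 'a \<Rightarrow> 'a" where
  "orth_proj V x = (THE p. p \<in> V \<and> (\<forall>v\<in>V. (x - p) \<bullet> v = 0))"

text \<open>Squared Frobenius norm of a real matrix.\<close>
definition frob_sq :: "real^'n^'m \<Rightarrow> real" where
  "frob_sq M = (\<Sum>i\<in>UNIV. \<Sum>j\<in>UNIV. (M $ i $ j)\<^sup>2)"

text \<open>P_S A: apply the orthogonal projection onto span of the columns indexed by S to every column of A.\<close>
definition projS :: "real^'n^'m \<Rightarrow> 'n set \<Rightarrow> real^'n^'m" where
  "projS A S = (\<chi> i j. orth_proj (span ((\<lambda>l. column l A) ` S)) (column j A) $ i)"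

definition Er :: "real^'n^'m \<Rightarrow> 'n set \<Rightarrow> real" where
  "Er A S = frob_sq (A - projS A S)"

definition OPT :: "real^'n^'m \<Rightarrow> nat \<Rightarrow> real" where
  "OPT A k = Inf {frob_sq (A - B) | B. rank B = k}"

end

theory Submission
  imports Defs
begin


lemma orth_proj_props:
  fixes V :: "'a::euclidean_space set"
  assumes "subspace V"
  shows "orth_proj V x \<in> V \<and> (\<forall>v\<in>V. (x - orth_proj V x) \<bullet> v = 0)"
proof -
  obtain y z where y: "y \<in> span V" and z: "\<And>w. w \<in> span V \<Longrightarrow> orthogonal z w" and xyz: "x = y + z"
    using orthogonal_subspace_decomp_exists[of V x] by blast
  have spV: "span V = V" using assms by (simp add: span_eq_iff)
  have ex: "\<exists>!p. p \<in> V \<and> (\<forall>v\<in>V. (x - p) \<bullet> v = 0)"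
  proof (rule ex1I[of _ y])
    show "y \<in> V \<and> (\<forall>v\<in>V. (x - y) \<bullet> v = 0)"
      using y z xyz spV by (auto simp: orthogonal_def)
  next
    fix p assume p: "p \<in> V \<and> (\<forall>v\<in>V. (x - p) \<bullet> v = 0)"
    have yV: "y \<in> V" using y spV by simp
    have d: "p - y \<in> V" using p yV assms by (simp add: subspace_diff)
    have "(x - p) \<bullet> (p - y) = 0" using p d by blast
    moreover have "(x - y) \<bullet> (p - y) = 0" using z d xyz spV
      by (auto simp: orthogonal_def)
    ultimately have "(p - y) \<bullet> (p - y) = 0"
      by (simp add: inner_diff_left inner_diff_right algebra_simps)
    then show "p = y" by simp
  qed
  show ?thesis unfolding orth_proj_def using theI'[OF ex] by blast
qed

lemma frob_sq_nonneg: "0 \<le> frob_sq M"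
  unfolding frob_sq_def by (intro sum_nonneg) auto

lemma Er_lower:
  fixes A :: "real^'n^'m" and \<nu> :: "real^'m"
  assumes orth: "\<forall>j\<in>S. \<nu> \<bullet> column j A = 0"
  shows "(\<nu> \<bullet> column l A)\<^sup>2 \<le> (\<nu> \<bullet> \<nu>) * Er A S"
proof -
  define V where "V = span ((\<lambda>j. column j A) ` S)"
  have sV: "subspace V" unfolding V_def by simp
  define p where "p = orth_proj V (column l A)"
  have pV: "p \<in> V" and pp: "\<forall>v\<in>V. (column l A - p) \<bullet> v = 0"
    using orth_proj_props[OF sV] unfolding p_def by auto
  have nuV: "\<nu> \<bullet> v = 0" if "v \<in> V" for v
    using orthogonal_to_span[of v "(\<lambda>j. column j A) ` S" \<nu>] that orth
    unfolding V_def orthogonal_def by auto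
  define w where "w = column l A - p"
  have nw: "\<nu> \<bullet> w = \<nu> \<bullet> column l A"
    using nuV[OF pV] unfolding w_def by (simp add: inner_diff_right)
  have "(\<nu> \<bullet> w)\<^sup>2 \<le> (\<nu> \<bullet> \<nu>) * (w \<bullet> w)" by (rule Cauchy_Schwarz_ineq)
  moreover have "w \<bullet> w \<le> Er A S"
  proof -
    have "w \<bullet> w = (\<Sum>i\<in>UNIV. ((A - projS A S) $ i $ l)\<^sup>2)"
      unfolding w_def p_def inner_vec_def projS_def V_def
      by (simp add: power2_eq_square column_def)
    also have "\<dots> \<le> (\<Sum>i\<in>UNIV. \<Sum>j\<in>UNIV. ((A - projS A S) $ i $ j)\<^sup>2)"
      by (intro sum_mono member_le_sum) auto
    finally show ?thesis unfolding Er_def frob_sq_def .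
  qed
  ultimately show ?thesis using nw
    by (metis (no_types, lifting) inner_ge_zero mult_left_mono order_trans)
qed



definition emb :: "('n \<Rightarrow> 'm) \<Rightarrow> real^'n \<Rightarrow> real^'m" where
  "emb \<iota> x = (\<chi> r. if r \<in> range \<iota> then x $ (inv \<iota> r) else 0)"

definition Emb :: "('n \<Rightarrow> 'm) \<Rightarrow> real^'n^'n \<Rightarrow> real^'n^'m" where
  "Emb \<iota> X = (\<chi> r. if r \<in> range \<iota> then X $ (inv \<iota> r) else 0)"

lemma sum_emb:
  fixes \<iota> :: "'n::finite \<Rightarrow> 'm::finite" and f :: "'n \<Rightarrow> 'a::comm_monoid_add"
  assumes "inj \<iota>"
  shows "(\<Sum>r\<in>UNIV. if r \<in> range \<iota> then f (inv \<iota> r) else 0) = (\<Sum>p\<in>UNIV. f p)"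
proof -
  have "(\<Sum>r\<in>UNIV. if r \<in> range \<iota> then f (inv \<iota> r) else 0) = (\<Sum>r\<in>range \<iota>. f (inv \<iota> r))"
    by (simp add: sum.If_cases Int_absorb1)
  also have "\<dots> = (\<Sum>p\<in>UNIV. f (inv \<iota> (\<iota> p)))"
    using assms by (simp add: sum.reindex)
  also have "\<dots> = (\<Sum>p\<in>UNIV. f p)" using assms by simp
  finally show ?thesis .
qed

lemma emb_inner: "inj \<iota> \<Longrightarrow> emb \<iota> x \<bullet> emb \<iota> y = x \<bullet> y"
proof -
  assume i: "inj \<iota>"
  have "emb \<iota> x \<bullet> emb \<iota> y = (\<Sum>r\<in>UNIV. if r \<in> range \<iota> then x $ inv \<iota> r * y $ inv \<iota> r else 0)"
    unfolding inner_vec_def emb_def by (intro sum.cong) auto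
  also have "\<dots> = x \<bullet> y" unfolding inner_vec_def
    using sum_emb[OF i, of "\<lambda>p. x $ p * y $ p"] by simp
  finally show ?thesis .
qed

lemma column_Emb: "column j (Emb \<iota> X) = emb \<iota> (column j X)"
  by (simp add: column_def Emb_def emb_def vec_eq_iff)

lemma Emb_diff: "Emb \<iota> X - Emb \<iota> Y = Emb \<iota> (X - Y)"
  by (simp add: Emb_def vec_eq_iff)

lemma frob_Emb: "inj \<iota> \<Longrightarrow> frob_sq (Emb \<iota> X) = frob_sq X"
proof -
  assume i: "inj \<iota>"
  have "frob_sq (Emb \<iota> X) = (\<Sum>r\<in>UNIV. if r \<in> range \<iota> then (\<Sum>j\<in>UNIV. (X $ inv \<iota> r $ j)\<^sup>2) else 0)"
    unfolding frob_sq_def Emb_def by (intro sum.cong) auto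
  also have "\<dots> = frob_sq X" unfolding frob_sq_def
    using sum_emb[OF i, of "\<lambda>p. (\<Sum>j\<in>UNIV. (X $ p $ j)\<^sup>2)"] by simp
  finally show ?thesis .
qed

lemma Emb_mult: "Emb \<iota> X *v x = emb \<iota> (X *v x)"
  by (simp add: Emb_def emb_def vec_eq_iff matrix_vector_mult_def)

lemma emb_at: "inj \<iota> \<Longrightarrow> emb \<iota> x $ (\<iota> p) = x $ p"
  by (simp add: emb_def)

lemma linear_emb: "linear (emb \<iota>)"
  by (rule linearI) (auto simp: emb_def vec_eq_iff)

lemma inj_emb: "inj \<iota> \<Longrightarrow> inj (emb \<iota>)"
  by (metis emb_at inj_def vec_eq_iff)

lemma rank_Emb:
  assumes "inj \<iota>"
  shows "rank (Emb \<iota> X) = rank X"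
proof -
  have "range ((*v) (Emb \<iota> X)) = emb \<iota> ` range ((*v) X)"
    by (auto simp: Emb_mult)
  then have "rank (Emb \<iota> X) = dim (emb \<iota> ` range ((*v) X))"
    by (simp add: rank_dim_range)
  also have "\<dots> = dim (range ((*v) X))"
    by (rule dim_image_eq[OF linear_emb]) (meson assms inj_emb inj_on_subset subset_UNIV)
  finally show ?thesis by (simp add: rank_dim_range)
qed

lemma inner_mult_cols:
  fixes M :: "real^'n^'m"
  shows "\<nu> \<bullet> (M *v z) = (\<Sum>q\<in>UNIV. z $ q * (\<nu> \<bullet> column q M))"
proof -
  have "\<nu> \<bullet> (M *v z) = (\<Sum>r\<in>UNIV. \<Sum>q\<in>UNIV. \<nu> $ r * (M $ r $ q * z $ q))"
    by (simp add: inner_vec_def matrix_vector_mult_def sum_distrib_left)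
  also have "\<dots> = (\<Sum>q\<in>UNIV. \<Sum>r\<in>UNIV. \<nu> $ r * (M $ r $ q * z $ q))"
    by (rule sum.swap)
  also have "\<dots> = (\<Sum>q\<in>UNIV. z $ q * (\<nu> \<bullet> column q M))"
    by (simp add: inner_vec_def column_def sum_distrib_left mult_ac)
  finally show ?thesis .
qed

lemma frob_mult_bound:
  fixes C :: "real^'n^'m"
  shows "(C *v z) \<bullet> (C *v z) \<le> frob_sq C * (z \<bullet> z)"
proof -
  have "(C *v z) \<bullet> (C *v z) = (\<Sum>r\<in>UNIV. (C $ r \<bullet> z)\<^sup>2)"
    by (simp add: inner_vec_def[of "C *v z"] matrix_vector_mul_component power2_eq_square)
  also have "\<dots> \<le> (\<Sum>r\<in>UNIV. (C $ r \<bullet> C $ r) * (z \<bullet> z))"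
    by (intro sum_mono Cauchy_Schwarz_ineq)
  also have "\<dots> = frob_sq C * (z \<bullet> z)"
  proof -
    have "C $ r \<bullet> C $ r = (\<Sum>j\<in>UNIV. (C $ r $ j)\<^sup>2)" for r
      by (simp add: inner_vec_def power2_eq_square)
    then show ?thesis unfolding frob_sq_def by (simp add: sum_distrib_right)
  qed
  finally show ?thesis .
qed



definition bs :: "('n \<Rightarrow> nat) \<Rightarrow> nat \<Rightarrow> nat" where
  "bs blk j = card {p. blk p = j}"

definition Mm :: "('n::finite \<Rightarrow> nat) \<Rightarrow> (nat \<Rightarrow> real) \<Rightarrow> real \<Rightarrow> real^'n^'n" where
  "Mm blk cc \<eta> = (\<chi> p q. if blk p = blk q \<and> blk p \<noteq> 0
      then cc (blk p) * ((if p = q then 1 else 0) - (1 - \<eta>) / real (bs blk (blk p))) else 0)"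

definition nuv :: "('n::finite \<Rightarrow> nat) \<Rightarrow> real \<Rightarrow> 'n \<Rightarrow> real^'n" where
  "nuv blk \<eta> l = (\<chi> p. (if p = l then 1 else 0) +
      (if blk p = blk l then (1 - \<eta>) / (\<eta> * real (bs blk (blk l))) else 0))"

lemma bs_pos: "0 < bs blk (blk (l::'n::finite))"
  unfolding bs_def by (rule card_gt_0_iff[THEN iffD2]) auto

lemma nu_col:
  fixes blk :: "'n::finite \<Rightarrow> nat"
  assumes "blk l \<noteq> 0" "0 < \<eta>"
  shows "nuv blk \<eta> l \<bullet> column q (Mm blk cc \<eta>) = (if q = l then cc (blk l) else 0)"
proof (cases "blk q = blk l")
  case False
  have h: "nuv blk \<eta> l $ p * Mm blk cc \<eta> $ p $ q = 0" for p
    using False by (auto simp: nuv_def Mm_def)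
  have "q \<noteq> l" using False by auto
  then show ?thesis using False unfolding inner_vec_def column_def by (simp add: h)
next
  case True
  define G where "G = {p. blk p = blk l}"
  define b where "b = real (bs blk (blk l))"
  have bpos: "b > 0" unfolding b_def using bs_pos by simp
  have bG: "real (card G) = b" unfolding b_def bs_def G_def by simp
  have lG: "l \<in> G" and qG: "q \<in> G" using True by (auto simp: G_def)
  define \<beta> where "\<beta> = (1 - \<eta>) / b"
  define \<gamma> where "\<gamma> = (1 - \<eta>) / (\<eta> * b)"
  have trm: "nuv blk \<eta> l $ p * Mm blk cc \<eta> $ p $ q =
     (if p \<in> G then cc (blk l) * (((if p = l then 1 else 0) + \<gamma>) * ((if p = q then 1 else 0) - \<beta>)) else 0)" for p
    using True assms(1) by (auto simp: nuv_def Mm_def G_def \<beta>_def \<gamma>_def b_def)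
  have "nuv blk \<eta> l \<bullet> column q (Mm blk cc \<eta>) =
      (\<Sum>p\<in>UNIV. if p \<in> G then cc (blk l) * (((if p = l then 1 else 0) + \<gamma>) * ((if p = q then 1 else 0) - \<beta>)) else 0)"
    unfolding inner_vec_def column_def using trm by simp
  also have "\<dots> = cc (blk l) * (\<Sum>p\<in>G. ((if p = l then 1 else 0) + \<gamma>) * ((if p = q then 1 else 0) - \<beta>))"
    by (simp add: sum.If_cases sum_distrib_left)
  also have "(\<Sum>p\<in>G. ((if p = l then 1 else 0) + \<gamma>) * ((if p = q then 1 else 0) - \<beta>)) =
      (\<Sum>p\<in>G. (if p = l then (if p = q then 1 else 0) else 0) - \<beta> * (if p = l then 1 else 0)
          + \<gamma> * (if p = q then 1 else 0) - \<gamma> * \<beta>)"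
    by (intro sum.cong) (auto simp: algebra_simps)
  also have "\<dots> = (if q = l then 1 else 0) - \<beta> + \<gamma> - \<gamma> * \<beta> * b"
    using lG qG bG by (simp add: sum.distrib sum_subtractf sum_distrib_left[symmetric] if_distrib[of "\<lambda>x. _ * x"] sum.delta cong: if_cong)
  finally have eq: "nuv blk \<eta> l \<bullet> column q (Mm blk cc \<eta>) =
     cc (blk l) * ((if q = l then 1 else 0) - \<beta> + \<gamma> - \<gamma> * \<beta> * b)" .
  have "- \<beta> + \<gamma> - \<gamma> * \<beta> * b = 0"
    unfolding \<beta>_def \<gamma>_def using bpos assms(2) by (simp add: field_simps)
  then show ?thesis unfolding eq by (auto simp: algebra_simps)
qed

lemma nu_norm:
  fixes blk :: "'n::finite \<Rightarrow> nat" and l :: 'n and \<eta> :: real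
  defines "\<gamma> \<equiv> (1 - \<eta>) / (\<eta> * real (bs blk (blk l)))"
  shows "nuv blk \<eta> l \<bullet> nuv blk \<eta> l = 1 + 2 * \<gamma> + real (bs blk (blk l)) * \<gamma>\<^sup>2"
proof -
  define G where "G = {p. blk p = blk l}"
  have lG: "l \<in> G" by (simp add: G_def)
  have trm: "nuv blk \<eta> l $ p * nuv blk \<eta> l $ p =
      (if p \<in> G then \<gamma>\<^sup>2 else 0) + (if p = l then 1 + 2 * \<gamma> else 0)" for p
    by (auto simp: nuv_def G_def \<gamma>_def power2_eq_square algebra_simps)
  have "nuv blk \<eta> l \<bullet> nuv blk \<eta> l = (\<Sum>p\<in>UNIV. (if p \<in> G then \<gamma>\<^sup>2 else 0) + (if p = l then 1 + 2 * \<gamma> else 0))"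
    unfolding inner_vec_def using trm by simp
  also have "\<dots> = real (card G) * \<gamma>\<^sup>2 + (1 + 2 * \<gamma>)"
    by (simp add: sum.distrib sum.If_cases)
  finally show ?thesis by (simp add: G_def bs_def)
qed

lemma Er_block:
  fixes blk :: "'n::finite \<Rightarrow> nat" and l :: 'n and \<eta> :: real and \<iota> :: "'n \<Rightarrow> 'm::finite"
  assumes "inj \<iota>" "blk l \<noteq> 0" "0 < \<eta>" "l \<notin> S"
  defines "\<gamma> \<equiv> (1 - \<eta>) / (\<eta> * real (bs blk (blk l)))"
  shows "(cc (blk l))\<^sup>2 \<le> (1 + 2 * \<gamma> + real (bs blk (blk l)) * \<gamma>\<^sup>2) * Er (Emb \<iota> (Mm blk cc \<eta>)) S"
proof -
  define \<nu> where "\<nu> = emb \<iota> (nuv blk \<eta> l)"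
  have c: "\<nu> \<bullet> column j (Emb \<iota> (Mm blk cc \<eta>)) = (if j = l then cc (blk l) else 0)" for j
    unfolding \<nu>_def column_Emb emb_inner[OF assms(1)] using nu_col[of blk l \<eta>, OF assms(2,3)] by simp
  have orth: "\<forall>j\<in>S. \<nu> \<bullet> column j (Emb \<iota> (Mm blk cc \<eta>)) = 0"
    using c assms(4) by auto
  have cl: "\<nu> \<bullet> column l (Emb \<iota> (Mm blk cc \<eta>)) = cc (blk l)" using c[of l] by simp
  have nn: "\<nu> \<bullet> \<nu> = 1 + 2 * \<gamma> + real (bs blk (blk l)) * \<gamma>\<^sup>2"
    unfolding \<nu>_def emb_inner[OF assms(1)] nu_norm \<gamma>_def ..
  from Er_lower[OF orth, of l] show ?thesis unfolding cl nn .
qed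

lemma kernel_bound:
  fixes blk :: "'n::finite \<Rightarrow> nat" and \<eta> :: real and cc :: "nat \<Rightarrow> real" and \<iota> :: "'n \<Rightarrow> 'm::finite" and B :: "real^'n^'m"
  assumes "inj \<iota>" "0 < \<eta>" "\<And>j. cc j > 0"
    and rk: "rank B < card {p. blk p \<noteq> 0}"
  defines "K \<equiv> (\<Sum>l\<in>{p. blk p \<noteq> 0}. (nuv blk \<eta> l \<bullet> nuv blk \<eta> l) / (cc (blk l))\<^sup>2)"
  shows "K > 0 \<and> 1 / K \<le> frob_sq (Emb \<iota> (Mm blk cc \<eta>) - B)"
proof -
  define G where "G = {p. blk p \<noteq> 0}"
  define Y where "Y = {x::real^'n. \<forall>p. p \<notin> G \<longrightarrow> x $ p = 0}"
  have sY: "subspace Y" unfolding Y_def subspace_def by auto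
  have dY0: "vec.dim Y = card G" unfolding Y_def by (rule dim_substandard_cart)
  have dY: "dim Y = card G" using dY0 dim_vec_eq[of Y] by simp
  have "\<not> inj_on ((*v) B) Y"
  proof
    assume inj: "inj_on ((*v) B) Y"
    have "dim ((*v) B ` Y) = dim Y"
      by (rule dim_image_eq) (auto simp: span_eq_iff[THEN iffD2, OF sY] inj)
    moreover have "dim ((*v) B ` Y) \<le> rank B"
      unfolding rank_dim_range by (rule dim_subset) auto
    ultimately show False using rk dY G_def by simp
  qed
  then obtain x y where xy: "x \<in> Y" "y \<in> Y" "x \<noteq> y" "B *v x = B *v y"
    unfolding inj_on_def by blast
  define z where "z = x - y"
  have zY: "z \<in> Y" using xy sY unfolding z_def by (simp add: subspace_diff)
  have z0: "z \<noteq> 0" using xy unfolding z_def by simp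
  have Bz: "B *v z = 0" using xy unfolding z_def by (simp add: matrix_vector_mult_diff_distrib)
  define M where "M = Mm blk cc \<eta>"
  have Cz: "(Emb \<iota> M - B) *v z = emb \<iota> (M *v z)"
    using Bz by (simp add: matrix_vector_mult_diff_rdistrib Emb_mult)
  have up: "(M *v z) \<bullet> (M *v z) \<le> frob_sq (Emb \<iota> M - B) * (z \<bullet> z)"
    using frob_mult_bound[of "Emb \<iota> M - B" z] unfolding Cz emb_inner[OF assms(1)] .
  have zl: "(z $ l)\<^sup>2 \<le> (nuv blk \<eta> l \<bullet> nuv blk \<eta> l) / (cc (blk l))\<^sup>2 * ((M *v z) \<bullet> (M *v z))"
    if "l \<in> G" for l
  proof -
    have bl: "blk l \<noteq> 0" using that G_def by simp
    have "nuv blk \<eta> l \<bullet> (M *v z) = (\<Sum>q\<in>UNIV. z $ q * (if q = l then cc (blk l) else 0))"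
      unfolding inner_mult_cols M_def nu_col[of blk l \<eta>, OF bl assms(2)] ..
    also have "\<dots> = cc (blk l) * z $ l"
      by (simp add: if_distrib[of "\<lambda>a. _ * a"] cong: if_cong)
    finally have e: "nuv blk \<eta> l \<bullet> (M *v z) = cc (blk l) * z $ l" .
    have "(cc (blk l) * z $ l)\<^sup>2 \<le> (nuv blk \<eta> l \<bullet> nuv blk \<eta> l) * ((M *v z) \<bullet> (M *v z))"
      using Cauchy_Schwarz_ineq[of "nuv blk \<eta> l" "M *v z"] unfolding e .
    moreover have "cc (blk l) > 0" using assms(3) by simp
    ultimately show ?thesis by (simp add: field_simps power_mult_distrib)
  qed
  have "z \<bullet> z = (\<Sum>l\<in>G. (z $ l)\<^sup>2)"
    unfolding inner_vec_def inner_real_def power2_eq_square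
    by (rule sum.mono_neutral_right) (use zY in \<open>auto simp: Y_def\<close>)
  also have "\<dots> \<le> (\<Sum>l\<in>G. (nuv blk \<eta> l \<bullet> nuv blk \<eta> l) / (cc (blk l))\<^sup>2 * ((M *v z) \<bullet> (M *v z)))"
    by (rule sum_mono) (rule zl)
  also have "\<dots> = K * ((M *v z) \<bullet> (M *v z))"
    unfolding K_def G_def by (simp add: sum_distrib_right)
  finally have zK: "z \<bullet> z \<le> K * ((M *v z) \<bullet> (M *v z))" .
  have zz: "z \<bullet> z > 0" using z0 by simp
  have K0: "K \<ge> 0" unfolding K_def by (rule sum_nonneg) (simp add: divide_nonneg_nonneg)
  have "1 * (z \<bullet> z) \<le> (K * frob_sq (Emb \<iota> M - B)) * (z \<bullet> z)"
    using zK up K0 mult_left_mono[OF up K0] by (simp add: mult.assoc)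
  then have one: "1 \<le> K * frob_sq (Emb \<iota> M - B)"
    using zz by (rule mult_right_le_imp_le)
  then have Kp: "K > 0" using K0 by (cases "K = 0") auto
  have "1 / K \<le> frob_sq (Emb \<iota> M - B)"
    using one Kp by (simp add: divide_le_eq mult.commute)
  then show ?thesis using Kp unfolding M_def by simp
qed



definition Bt :: "('n::finite \<Rightarrow> nat) \<Rightarrow> (nat \<Rightarrow> real) \<Rightarrow> real \<Rightarrow> nat \<Rightarrow> real^'n^'n" where
  "Bt blk cc \<eta> i = (\<chi> p q. if blk p = blk q \<and> blk p \<noteq> 0 \<and> blk p \<le> i
      then cc (blk p) * ((if p = q then 1 else 0) -
         (if blk p = i then 1 / real (bs blk i) else (1 - \<eta>) / real (bs blk (blk p)))) else 0)"

lemma sum_block: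
  fixes blk :: "'n::finite \<Rightarrow> nat" and f :: "'n \<Rightarrow> real"
  shows "(\<Sum>q\<in>UNIV. if blk q = j then f q else 0) = (\<Sum>q\<in>{q. blk q = j}. f q)"
  by (simp add: sum.If_cases)

lemma frob_Bt:
  fixes blk :: "'n::finite \<Rightarrow> nat"
  assumes "0 \<le> \<eta>" "\<eta> \<le> 1" "\<And>j. 0 \<le> cc j" "\<And>j. Suc i \<le> j \<Longrightarrow> cc j \<le> cc (Suc i)" "i \<noteq> 0"
  shows "frob_sq (Mm blk cc \<eta> - Bt blk cc \<eta> i) \<le> (cc i * \<eta>)\<^sup>2 + real (CARD('n) * CARD('n)) * (cc (Suc i))\<^sup>2"
proof -
  define b where "b = real (bs blk i)"
  define f1 where "f1 = (\<lambda>p q::'n. if blk p = i \<and> blk q = i then (cc i * \<eta> / b)\<^sup>2 else 0)"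
  have ent: "((Mm blk cc \<eta> - Bt blk cc \<eta> i) $ p $ q)\<^sup>2 \<le> f1 p q + (cc (Suc i))\<^sup>2" for p q
  proof -
    consider "blk p = blk q \<and> blk p \<noteq> 0 \<and> blk p < i" | "blk p = i \<and> blk q = i"
      | "blk p = blk q \<and> blk p \<noteq> 0 \<and> blk p > i" | "\<not> (blk p = blk q \<and> blk p \<noteq> 0)"
      by linarith
    then show ?thesis
    proof cases
      case 1
      have "(Mm blk cc \<eta> - Bt blk cc \<eta> i) $ p $ q = 0"
        using 1 by (auto simp: Mm_def Bt_def)
      moreover have "f1 p q \<ge> 0" by (simp add: f1_def)
      ultimately show ?thesis by simp
    next
      case 2
      have bp: "b > 0" unfolding b_def using bs_pos[of blk p] 2 by simp
      have "(Mm blk cc \<eta> - Bt blk cc \<eta> i) $ p $ q = cc i * \<eta> / b"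
        using 2 assms(5) bp by (simp add: Mm_def Bt_def b_def field_simps)
      then show ?thesis using 2 by (simp add: f1_def)
    next
      case 3
      define j where "j = blk p"
      have bp: "real (bs blk j) \<ge> 1" using bs_pos[of blk p] unfolding j_def by linarith
      define \<beta> where "\<beta> = (1 - \<eta>) / real (bs blk j)"
      have b01: "0 \<le> \<beta>" "\<beta> \<le> 1" unfolding \<beta>_def using bp assms(1,2)
        by (auto simp: field_simps)
      have e: "(Mm blk cc \<eta> - Bt blk cc \<eta> i) $ p $ q = cc j * ((if p = q then 1 else 0) - \<beta>)"
        using 3 by (simp add: Mm_def Bt_def j_def \<beta>_def)
      have "\<bar>(if p = q then 1 else 0) - \<beta>\<bar> \<le> 1" using b01 by auto
      then have "((if p = q then 1 else 0) - \<beta>)\<^sup>2 \<le> 1" by (simp only: abs_square_le_1)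
      then have "(cc j * ((if p = q then 1 else 0) - \<beta>))\<^sup>2 \<le> (cc j)\<^sup>2"
        unfolding power_mult_distrib by (rule mult_left_le) simp
      also have "\<dots> \<le> (cc (Suc i))\<^sup>2"
        using assms(3,4)[of j] 3 unfolding j_def by (simp add: power_mono)
      moreover have "f1 p q = 0" using 3 by (simp add: f1_def)
      ultimately show ?thesis unfolding e by simp
    next
      case 4
      have "Mm blk cc \<eta> $ p $ q = 0" "Bt blk cc \<eta> i $ p $ q = 0"
        using 4 by (auto simp: Mm_def Bt_def)
      moreover have "f1 p q \<ge> 0" by (simp add: f1_def)
      ultimately show ?thesis by simp
    qed
  qed
  have "frob_sq (Mm blk cc \<eta> - Bt blk cc \<eta> i) \<le> (\<Sum>p\<in>UNIV. \<Sum>q\<in>UNIV. f1 p q + (cc (Suc i))\<^sup>2)"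
    unfolding frob_sq_def by (intro sum_mono ent)
  also have "\<dots> = (\<Sum>p\<in>UNIV. \<Sum>q\<in>UNIV. f1 p q) + real (CARD('n) * CARD('n)) * (cc (Suc i))\<^sup>2"
    by (simp add: sum.distrib power2_eq_square)
  also have "(\<Sum>p\<in>UNIV. \<Sum>q\<in>UNIV. f1 p q) = b * b * (cc i * \<eta> / b)\<^sup>2"
  proof -
    have "(\<Sum>q\<in>UNIV. f1 p q) = (if blk p = i then b * (cc i * \<eta> / b)\<^sup>2 else 0)" for p
      unfolding f1_def b_def bs_def by (simp add: sum.If_cases)
    then show ?thesis unfolding b_def bs_def by (simp add: sum.If_cases)
  qed
  also have "b * b * (cc i * \<eta> / b)\<^sup>2 \<le> (cc i * \<eta>)\<^sup>2"
    by (cases "b = 0") (auto simp: field_simps power2_eq_square assms(1))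
  finally show ?thesis by simp
qed

lemma mult_delta_r: "(c::real) * (if P then 1 else 0) = (if P then c else 0)"
  and mult_delta_l: "(if P then 1 else 0) * (c::real) = (if P then c else 0)"
  by simp_all

lemma delta_sum:
  fixes f :: "'a \<Rightarrow> real"
  assumes "finite A" "p \<in> A"
  shows "(\<Sum>q\<in>A. c * ((if p = q then 1 else 0) - d) * f q) = c * (f p - d * sum f A)"
proof -
  have "(\<Sum>q\<in>A. c * ((if p = q then 1 else 0) - d) * f q) = (\<Sum>q\<in>A. (if p = q then c * f q else 0) - (c * d) * f q)"
    by (rule sum.cong) (auto simp: algebra_simps)
  also have "\<dots> = c * f p - c * d * sum f A"
    using assms by (simp add: sum_subtractf sum_distrib_left)
  finally show ?thesis by (simp add: algebra_simps)
qed

lemma rank_Bt: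
  fixes blk :: "'n::finite \<Rightarrow> nat"
  assumes "0 < \<eta>" "\<eta> < 1" "\<And>j. 0 < cc j" "i \<noteq> 0" "p0 \<in> {p. blk p = i}"
  shows "rank (Bt blk cc \<eta> i) = card {p. blk p \<noteq> 0 \<and> blk p \<le> i} - 1"
proof -
  define H where "H = {p. blk p \<noteq> 0 \<and> blk p \<le> i}"
  define Gi where "Gi = {p. blk p = i}"
  define Y where "Y = {x::real^'n. \<forall>p. p \<notin> H \<longrightarrow> x $ p = 0}"
  define U where "U = {x::real^'n. (\<forall>p. p \<notin> H \<longrightarrow> x $ p = 0) \<and> (\<Sum>p\<in>Gi. x $ p) = 0}"
  define B where "B = Bt blk cc \<eta> i"
  have sU: "subspace U" unfolding U_def subspace_def by (auto simp: sum.distrib sum_distrib_left[symmetric])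
  have dY0: "vec.dim Y = card H" unfolding Y_def by (rule dim_substandard_cart)
  have dY: "dim Y = card H" using dY0 dim_vec_eq[of Y] by simp
  define e where "e = (axis p0 1 :: real^'n)"
  have p0: "blk p0 = i" using assms(5) by simp
  have GiH: "Gi \<subseteq> H" unfolding Gi_def H_def using assms(4) by auto
  have eY: "e \<in> Y" unfolding Y_def e_def H_def using p0 assms(4) by (auto simp: axis_def)
  have eU: "e \<notin> U" unfolding U_def e_def using p0
    by (auto simp: axis_def Gi_def sum.delta[of "{p. blk p = blk p0}"])
  have UY: "U \<subseteq> Y" unfolding U_def Y_def by auto
  have YU: "Y \<subseteq> span (insert e U)"
  proof
    fix y assume y: "y \<in> Y"
    define s where "s = (\<Sum>p\<in>Gi. y $ p)"
    have "y - s *\<^sub>R e \<in> U"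
      using y p0 GiH unfolding U_def Y_def s_def e_def
      by (auto simp: axis_def sum_subtractf Gi_def mult_delta_r sum.delta[of "{p. blk p = blk p0}"])
    then have "s *\<^sub>R e + (y - s *\<^sub>R e) \<in> span (insert e U)"
      by (intro span_add span_mul span_base) (auto intro: span_base)
    then show "y \<in> span (insert e U)" by simp
  qed
  have dU: "dim U = card H - 1"
  proof -
    have "dim (insert e U) = dim U + 1"
      using eU sU by (simp add: dim_insert span_eq_iff[THEN iffD2])
    moreover have "dim (insert e U) \<le> dim Y" using eY UY by (intro dim_subset) auto
    moreover have "dim Y \<le> dim (insert e U)" using YU dim_subset[OF YU] by simp
    ultimately show ?thesis using dY by simp
  qed
  have BH: "B $ p $ q = 0" if "p \<notin> H" for p q using that by (auto simp: B_def Bt_def H_def)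
  have row_sum: "(B *v x) $ p = (\<Sum>q\<in>{q. blk q = blk p}. B $ p $ q * x $ q)" for x p
  proof -
    have "(B *v x) $ p = (\<Sum>q\<in>UNIV. if blk q = blk p then B $ p $ q * x $ q else 0)"
    proof -
      have z: "B $ p $ q = 0" if "blk q \<noteq> blk p" for q using that by (simp add: B_def Bt_def)
      show ?thesis unfolding matrix_vector_mult_def vec_lambda_beta by (rule sum.cong) (auto simp: z)
    qed
    then show ?thesis by (simp add: sum_block)
  qed
  have "range ((*v) B) = U"
  proof
    show "range ((*v) B) \<subseteq> U"
    proof safe
      fix x
      have "(B *v x) $ p = 0" if "p \<notin> H" for p
        unfolding matrix_vector_mult_def using BH[OF that] by simp
      moreover have "(\<Sum>p\<in>Gi. (B *v x) $ p) = 0"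
      proof -
        define b where "b = real (card Gi)"
        have bp: "b > 0" unfolding b_def Gi_def using bs_pos[of blk p0] p0 by (simp add: bs_def)
        define sx where "sx = (\<Sum>q\<in>Gi. x $ q)"
        have "(B *v x) $ p = cc i * (x $ p - sx / b)" if "p \<in> Gi" for p
        proof -
          have "(B *v x) $ p = (\<Sum>q\<in>Gi. cc i * ((if p = q then 1 else 0) - 1 / b) * x $ q)"
            unfolding row_sum using that assms(4)
            by (intro sum.cong) (auto simp: B_def Bt_def Gi_def b_def bs_def)
          also have "\<dots> = cc i * (x $ p - sx / b)"
            using delta_sum[of Gi p "cc i" "1 / b" "\<lambda>q. x $ q"] that unfolding sx_def Gi_def
            by simp
          finally show ?thesis .
        qed
        then have "(\<Sum>p\<in>Gi. (B *v x) $ p) = (\<Sum>p\<in>Gi. cc i * (x $ p - sx / b))"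
          by (intro sum.cong) auto
        also have "\<dots> = cc i * (sx - b * (sx / b))"
          by (simp add: sum_distrib_left[symmetric] sum_subtractf sx_def b_def)
        also have "\<dots> = 0" using bp by simp
        finally show ?thesis .
      qed
      ultimately show "B *v x \<in> U" unfolding U_def by auto
    qed
  next
    show "U \<subseteq> range ((*v) B)"
    proof
      fix x assume xU: "x \<in> U"
      define sm where "sm = (\<lambda>j. \<Sum>r\<in>{r. blk r = j}. x $ r)"
      define gm where "gm = (\<lambda>j. (1 - \<eta>) / (\<eta> * real (bs blk j)))"
      define y where "y = (\<chi> q. if blk q = i then x $ q / cc i
                  else if blk q \<noteq> 0 \<and> blk q < i then (x $ q + gm (blk q) * sm (blk q)) / cc (blk q) else 0)"
      have "B *v y = x"
      proof (subst vec_eq_iff, rule allI)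
        fix p
        show "(B *v y) $ p = x $ p"
        proof (cases "p \<in> H")
          case False
          then show ?thesis using xU BH[OF False] unfolding U_def matrix_vector_mult_def by simp
        next
          case True
          define j where "j = blk p"
          define b where "b = real (bs blk j)"
          have bp: "b > 0" unfolding b_def j_def using bs_pos[of blk p] by simp
          have ccj: "cc j > 0" using assms(3) by simp
          show ?thesis
          proof (cases "j = i")
            case ji: True
            have s0: "sm j = 0" using xU ji unfolding U_def sm_def Gi_def by simp
            have "(B *v y) $ p = (\<Sum>q\<in>{q. blk q = j}. cc j * ((if p = q then 1 else 0) - 1 / b) * (x $ q / cc j))"
              unfolding row_sum j_def[symmetric] using True ji
              by (intro sum.cong) (auto simp: B_def Bt_def y_def H_def b_def j_def)
            also have "\<dots> = x $ p - sm j / b"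
              using delta_sum[of "{q. blk q = j}" p "cc j" "1 / b" "\<lambda>q. x $ q / cc j"] ccj
              unfolding sm_def j_def by (simp add: sum_divide_distrib[symmetric] field_simps)
            finally show ?thesis using s0 by simp
          next
            case jn: False
            have jlt: "j \<noteq> 0 \<and> j < i" using True jn unfolding H_def j_def by auto
            define \<beta> where "\<beta> = (1 - \<eta>) / b"
            define \<gamma> where "\<gamma> = gm j"
            have "(B *v y) $ p = (\<Sum>q\<in>{q. blk q = j}. cc j * ((if p = q then 1 else 0) - \<beta>) * ((x $ q + \<gamma> * sm j) / cc j))"
              unfolding row_sum j_def[symmetric] using jlt
              by (intro sum.cong) (auto simp: B_def Bt_def y_def b_def j_def \<beta>_def \<gamma>_def)
            also have "\<dots> = (\<Sum>q\<in>{q. blk q = j}. (if p = q then x $ q + \<gamma> * sm j else 0) - \<beta> * x $ q - \<beta> * \<gamma> * sm j)"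
              using ccj by (intro sum.cong) (auto simp: field_simps)
            also have "\<dots> = x $ p + \<gamma> * sm j - \<beta> * sm j - b * (\<beta> * \<gamma> * sm j)"
              by (simp add: sum_subtractf sum_distrib_left[symmetric] sm_def b_def bs_def j_def)
            finally have eq: "(B *v y) $ p = x $ p + \<gamma> * sm j - \<beta> * sm j - b * (\<beta> * \<gamma> * sm j)" .
            have e2: "\<gamma> * sm j - \<beta> * sm j - b * (\<beta> * \<gamma> * sm j) = sm j * (\<gamma> * (1 - b * \<beta>) - \<beta>)"
              by (simp add: algebra_simps)
            have e3: "\<gamma> * (1 - b * \<beta>) - \<beta> = 0"
              unfolding \<gamma>_def \<beta>_def gm_def b_def using bp assms(1) unfolding b_def
              by (simp add: field_simps)
            show ?thesis using eq e2 e3 by simp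
          qed
        qed
      qed
      then show "x \<in> range ((*v) B)" by (metis rangeI)
    qed
  qed
  then have "rank B = dim U" by (simp add: rank_dim_range)
  then show ?thesis using dU unfolding B_def H_def by simp
qed



lemma level:
  fixes blk :: "'n::finite \<Rightarrow> nat" and \<iota> :: "'n \<Rightarrow> 'm::finite" and S :: "'n set"
    and \<delta> \<eta> q D :: real and kk :: nat
  assumes inj: "inj \<iota>" and d0: "0 < \<delta>" and d1: "\<delta> < 1"
    and eta: "\<eta> = \<delta> / (2 * real CARD('n))" and qdef: "q = \<delta> * \<eta> / (2 * real CARD('n))"
    and i1: "1 \<le> i"
    and cH: "card {p. blk p \<noteq> 0 \<and> blk p \<le> i} = Suc kk"
    and cS: "card S = kk"
    and cG: "kk < card {p. blk p \<noteq> 0}"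
    and Dbs: "D \<le> real (bs blk i)" and Dn: "D \<le> real CARD('n)"
    and p0: "blk p0 = i"
  shows "(1 - \<delta>) * D \<le> Er (Emb \<iota> (Mm blk (\<lambda>j. q ^ j) \<eta>)) S / OPT (Emb \<iota> (Mm blk (\<lambda>j. q ^ j) \<eta>)) kk"
proof -
  define n where "n = real CARD('n)"
  have n1: "n \<ge> 1" unfolding n_def by simp
  have nc: "real CARD('n) \<ge> 1" by simp
  define cc where "cc = (\<lambda>j::nat. q ^ j)"
  define A where "A = Emb \<iota> (Mm blk cc \<eta>)"
  have eta0: "0 < \<eta>" unfolding eta using d0 by simp
  have d2n: "\<delta> < real CARD('n) * 2" using d1 nc by linarith
  have eta1: "\<eta> < 1" unfolding eta using d2n by (simp add: field_simps)
  have q0: "0 < q" unfolding qdef using d0 eta0 by simp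
  have de1: "\<delta> * \<eta> \<le> 1" using d0 d1 eta0 eta1 by (simp add: mult_le_one less_imp_le)
  have n2: "1 \<le> real CARD('n) * 2" using nc by linarith
  have q1: "q \<le> 1" unfolding qdef using de1 n2 by (simp add: field_simps)
  have cc0: "\<And>j. 0 < cc j" unfolding cc_def using q0 by simp
  have cc0': "\<And>j. 0 \<le> cc j" using cc0 less_imp_le by blast
  have ccmono: "\<And>j. Suc i \<le> j \<Longrightarrow> cc j \<le> cc (Suc i)"
    unfolding cc_def using q0 q1 power_decreasing[of "Suc i" _ q] by simp
  define X where "X = (cc i * \<eta>)\<^sup>2"
  have X0: "X > 0" unfolding X_def using cc0[of i] eta0 by simp
  \<comment> \<open>upper bound on OPT\<close>
  define u where "u = (cc i * \<eta>)\<^sup>2 + real (CARD('n) * CARD('n)) * (cc (Suc i))\<^sup>2"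
  have uX: "u \<le> X * (1 + \<delta> / 4)"
  proof -
    have "real (CARD('n) * CARD('n)) * (cc (Suc i))\<^sup>2 = (n * q)\<^sup>2 * (cc i)\<^sup>2"
      unfolding cc_def n_def by (simp add: power2_eq_square algebra_simps)
    also have "n * q = \<delta> * \<eta> / 2" unfolding qdef n_def using n1 n_def by simp
    also have "(\<delta> * \<eta> / 2)\<^sup>2 * (cc i)\<^sup>2 = X * (\<delta>\<^sup>2 / 4)"
      unfolding X_def by (simp add: power2_eq_square field_simps)
    also have "\<dots> \<le> X * (\<delta> / 4)" using X0 d0 d1
      by (intro mult_left_mono) (auto simp: power2_eq_square mult_le_cancel_right1 less_imp_le)
    finally show ?thesis unfolding u_def X_def by (simp add: algebra_simps)
  qed
  have iz: "i \<noteq> 0" using i1 by simp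
  have rkB: "rank (Emb \<iota> (Bt blk cc \<eta> i)) = kk"
    using rank_Emb[OF inj] rank_Bt[OF eta0 eta1 cc0 iz, of p0] p0 cH by simp
  have fB: "frob_sq (A - Emb \<iota> (Bt blk cc \<eta> i)) \<le> u"
    unfolding A_def Emb_diff frob_Emb[OF inj] u_def
    by (rule frob_Bt) (use eta0 eta1 cc0' ccmono iz in auto)
  have bdd: "bdd_below {frob_sq (A - B) |B. rank B = kk}"
    by (rule bdd_belowI[of _ 0]) (auto simp: frob_sq_nonneg)
  have OPTu: "OPT A kk \<le> u"
    unfolding OPT_def
    by (rule order_trans[OF cInf_lower[OF _ bdd] fB]) (use rkB in blast)
  \<comment> \<open>positivity of OPT\<close>
  define K where "K = (\<Sum>l\<in>{p. blk p \<noteq> 0}. (nuv blk \<eta> l \<bullet> nuv blk \<eta> l) / (cc (blk l))\<^sup>2)"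
  have Kb: "K > 0 \<and> 1 / K \<le> frob_sq (A - B)" if "rank B = kk" for B :: "real^'n^'m"
    using kernel_bound[OF inj eta0 cc0, of B blk] that cG unfolding K_def A_def by simp
  have Kp: "K > 0" using Kb[OF rkB] by simp
  have OPT0: "OPT A kk > 0"
  proof -
    have "1 / K \<le> OPT A kk"
      unfolding OPT_def by (rule cInf_greatest) (use rkB Kb in auto)
    moreover have "0 < 1 / K" using Kp by simp
    ultimately show ?thesis by linarith
  qed
  \<comment> \<open>lower bound on Er\<close>
  obtain l where l: "l \<in> {p. blk p \<noteq> 0 \<and> blk p \<le> i}" "l \<notin> S"
  proof -
    have "\<not> {p. blk p \<noteq> 0 \<and> blk p \<le> i} \<subseteq> S"
    proof
      assume "{p. blk p \<noteq> 0 \<and> blk p \<le> i} \<subseteq> S"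
      then have "card {p. blk p \<noteq> 0 \<and> blk p \<le> i} \<le> card S" by (intro card_mono) auto
      then show False using cH cS by simp
    qed
    then show ?thesis using that by blast
  qed
  define j where "j = blk l"
  define b where "b = real (bs blk j)"
  have b1: "b \<ge> 1" unfolding b_def j_def using bs_pos[of blk l] by linarith
  have bn: "b \<le> n" unfolding b_def n_def bs_def by (simp add: card_mono)
  define \<gamma> where "\<gamma> = (1 - \<eta>) / (\<eta> * b)"
  have Er0: "0 \<le> Er A S" unfolding Er_def by (rule frob_sq_nonneg)
  have EB: "(cc j)\<^sup>2 \<le> (1 + 2 * \<gamma> + b * \<gamma>\<^sup>2) * Er A S"
    using Er_block[OF inj _ eta0 l(2), of blk cc] l(1) unfolding A_def \<gamma>_def b_def j_def by simp
  have W: "(1 + 2 * \<gamma> + b * \<gamma>\<^sup>2) * (\<eta>\<^sup>2 * b) = 1 + \<eta>\<^sup>2 * (b - 1)"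
    unfolding \<gamma>_def using eta0 b1 by (simp add: field_simps power2_eq_square)
  have "(cc j)\<^sup>2 * (\<eta>\<^sup>2 * b) \<le> ((1 + 2 * \<gamma> + b * \<gamma>\<^sup>2) * Er A S) * (\<eta>\<^sup>2 * b)"
    by (rule mult_right_mono[OF EB]) (use b1 in simp)
  also have "\<dots> = ((1 + 2 * \<gamma> + b * \<gamma>\<^sup>2) * (\<eta>\<^sup>2 * b)) * Er A S" by (simp only: mult_ac)
  also have "\<dots> = (1 + \<eta>\<^sup>2 * (b - 1)) * Er A S" by (simp only: W)
  also have "\<dots> \<le> (1 + \<delta> / 4) * Er A S"
  proof (rule mult_right_mono[OF _ Er0])
    have "\<eta>\<^sup>2 * (b - 1) \<le> \<eta>\<^sup>2 * n" using bn by (intro mult_left_mono) auto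
    also have "\<eta>\<^sup>2 * n = \<delta> * (\<delta> / (4 * n))" unfolding eta n_def[symmetric] using n1
      by (simp add: power2_eq_square field_simps)
    also have "\<dots> \<le> \<delta> * (1/4)" using d0 d1 n1
      by (intro mult_left_mono) (auto simp: field_simps)
    finally show "1 + \<eta>\<^sup>2 * (b - 1) \<le> 1 + \<delta> / 4" by simp
  qed
  finally have Er1: "(cc j)\<^sup>2 * (\<eta>\<^sup>2 * b) \<le> (1 + \<delta> / 4) * Er A S" .
  have XD: "X * D \<le> (cc j)\<^sup>2 * (\<eta>\<^sup>2 * b)"
  proof (cases "j = i")
    case True
    have "X * D \<le> X * b" using Dbs True X0 unfolding b_def by (intro mult_left_mono) auto
    then show ?thesis unfolding X_def True by (simp add: power_mult_distrib algebra_simps)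
  next
    case False
    then have ji: "j < i" using l(1) unfolding j_def by simp
    have "cc i = cc j * q ^ (i - j)" unfolding cc_def using ji by (simp add: power_add[symmetric])
    also have "\<dots> \<le> cc j * q" using ji q0 q1 cc0'
      by (intro mult_left_mono) (auto simp: power_decreasing[of 1 "i - j" q, simplified])
    finally have ci: "cc i \<le> cc j * q" .
    have qn: "q * q * n \<le> 1"
    proof -
      have "q * n = \<delta> * \<eta> / 2" unfolding qdef n_def using nc by simp
      then have "q * n \<le> 1" using de1 by linarith
      then have "q * (q * n) \<le> 1" using mult_le_one[OF q1, of "q * n"] q0 n1 by simp
      then show ?thesis by (simp add: mult.assoc)
    qed
    have "X * D \<le> X * n" using Dn X0 unfolding n_def by (intro mult_left_mono) auto
    also have "X * n = (cc i)\<^sup>2 * n * \<eta>\<^sup>2" unfolding X_def by (simp add: power_mult_distrib)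
    also have "\<dots> \<le> (cc j * q)\<^sup>2 * n * \<eta>\<^sup>2"
      using ci cc0' n1 by (intro mult_right_mono power_mono) auto
    also have "\<dots> = (cc j)\<^sup>2 * \<eta>\<^sup>2 * (q * q * n)" by (simp add: power2_eq_square algebra_simps)
    also have "\<dots> \<le> (cc j)\<^sup>2 * \<eta>\<^sup>2 * b" using qn b1 by (intro mult_left_mono) auto
    finally show ?thesis by (simp add: algebra_simps)
  qed
  have D0: "D \<ge> 0 \<or> D < 0" by auto
  \<comment> \<open>combine\<close>
  have key: "(1 - \<delta>) * D * u \<le> Er A S"
  proof (cases "D \<le> 0")
    case True
    have "(1 - \<delta>) * D * u \<le> 0" using True d1 OPTu OPT0
      by (intro mult_nonpos_nonneg mult_nonneg_nonpos) auto
    then show ?thesis using Er0 by linarith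
  next
    case False
    have "(1 - \<delta>) * D * u \<le> (1 - \<delta>) * D * (X * (1 + \<delta> / 4))"
      using uX False d1 by (intro mult_left_mono) auto
    also have "\<dots> = X * D * ((1 - \<delta>) * (1 + \<delta> / 4))" by (simp add: algebra_simps)
    also have "\<dots> \<le> X * D / (1 + \<delta> / 4)"
    proof -
      have s1: "\<delta> * \<delta> \<le> \<delta> * 1" by (rule mult_left_mono) (use d0 d1 in auto)
      have e1: "(1 + \<delta> / 4) * (1 + \<delta> / 4) = 1 + \<delta> / 2 + (\<delta> * \<delta>) / 16" by (simp add: field_simps)
      have s2: "(1 + \<delta> / 4) * (1 + \<delta> / 4) \<le> 1 + \<delta>" unfolding e1 using s1 d0 by linarith
      have s3: "(1 - \<delta>) * ((1 + \<delta> / 4) * (1 + \<delta> / 4)) \<le> (1 - \<delta>) * (1 + \<delta>)"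
        by (rule mult_left_mono[OF s2]) (use d1 in simp)
      have s4: "(1 - \<delta>) * (1 + \<delta>) \<le> 1" by (simp add: algebra_simps)
      have "(1 - \<delta>) * (1 + \<delta> / 4) * (1 + \<delta> / 4) \<le> 1" using s3 s4 by (simp add: mult.assoc)
      then have h: "(1 - \<delta>) * (1 + \<delta> / 4) \<le> 1 / (1 + \<delta> / 4)" using d0
        by (simp add: field_simps)
      have "X * D * ((1 - \<delta>) * (1 + \<delta> / 4)) \<le> X * D * (1 / (1 + \<delta> / 4))"
        by (rule mult_left_mono[OF h]) (use X0 False in simp)
      then show ?thesis by simp
    qed
    also have "\<dots> \<le> Er A S" using XD Er1 d0
      by (simp add: divide_le_eq mult.commute)
    finally show ?thesis .
  qed
  have "(1 - \<delta>) * D \<le> Er A S / u"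
  proof -
    have u0: "u > 0" using OPTu OPT0 by linarith
    show ?thesis using key u0 by (simp add: le_divide_eq)
  qed
  also have "\<dots> \<le> Er A S / OPT A kk"
    using OPTu OPT0 Er0 by (intro divide_left_mono) auto
  finally show ?thesis unfolding A_def cc_def .
qed



lemma k_mono_strict:
  assumes "\<forall>i<t. k i < k (Suc i)"
  shows "a < b \<Longrightarrow> b \<le> t \<Longrightarrow> k a < (k b :: nat)"
proof (induction b)
  case 0 then show ?case by simp
next
  case (Suc b)
  then have kb: "k b < k (Suc b)" using assms by simp
  show ?case
  proof (cases "a = b")
    case True then show ?thesis using kb by simp
  next
    case False then show ?thesis using Suc kb by simp
  qed
qed

lemma k_mono:
  assumes "\<forall>i<t. k i < k (Suc i)"
  shows "a \<le> b \<Longrightarrow> b \<le> t \<Longrightarrow> k a \<le> (k b :: nat)"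
  using k_mono_strict[OF assms, of a b] by (cases "a = b") auto

lemma card_prefix:
  fixes pos :: "'n::finite \<Rightarrow> nat"
  assumes "bij_betw pos UNIV {0..<CARD('n)}" "a < CARD('n)"
  shows "card {p. pos p \<le> a} = Suc a"
proof -
  have inj: "inj pos" using assms(1) by (simp add: bij_betw_def)
  have "pos ` {p. pos p \<le> a} = {0..a}"
  proof
    show "pos ` {p. pos p \<le> a} \<subseteq> {0..a}" by auto
    show "{0..a} \<subseteq> pos ` {p. pos p \<le> a}"
    proof
      fix x assume "x \<in> {0..a}"
      then have "x \<in> {0..<CARD('n)}" using assms(2) by auto
      then obtain p where "pos p = x" using assms(1) unfolding bij_betw_def by (metis imageE)
      then show "x \<in> pos ` {p. pos p \<le> a}" using \<open>x \<in> {0..a}\<close> by auto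
    qed
  qed
  then have "card (pos ` {p. pos p \<le> a}) = Suc a" by simp
  then show ?thesis using card_image[OF inj_on_subset[OF inj]] by (metis subset_UNIV)
qed

theorem theorem3:
  fixes \<delta> :: real and t :: nat and k :: "nat \<Rightarrow> nat"
  assumes "0 < \<delta>" and "\<delta> < 1"
    and "k 0 = 0"
    and "\<forall>i<t. k i < k (Suc i)"
    and "k t < CARD('n)"
    and "CARD('n) \<le> CARD('m)"
  shows "\<exists>A :: real^'n^'m. \<forall>i\<in>{1..t}. \<forall>S :: 'n set. card S = k i \<longrightarrow>
           Er A S / OPT A (k i) \<ge> (1 - \<delta>) * (real (k i) - real (k (i - 1)))"
proof -
  obtain \<iota> :: "'n \<Rightarrow> 'm" where inj: "inj \<iota>"
    using card_le_inj[of "UNIV :: 'n set" "UNIV :: 'm set"] assms(6) by auto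
  obtain pos :: "'n \<Rightarrow> nat" where pos: "bij_betw pos UNIV {0..<CARD('n)}"
    using ex_bij_betw_finite_nat[of "UNIV :: 'n set"] by auto
  have km: "\<And>a b. a \<le> b \<Longrightarrow> b \<le> t \<Longrightarrow> k a \<le> k b" using k_mono[OF assms(4)] by blast
  have kms: "\<And>a b. a < b \<Longrightarrow> b \<le> t \<Longrightarrow> k a < k b" using k_mono_strict[OF assms(4)] by blast
  define blk where "blk p = (if pos p \<le> k t then (LEAST j. 1 \<le> j \<and> pos p \<le> k j) else 0)" for p
  define \<eta> where "\<eta> = \<delta> / (2 * real CARD('n))"
  define q where "q = \<delta> * \<eta> / (2 * real CARD('n))"
  define A where "A = Emb \<iota> (Mm blk (\<lambda>j. q ^ j) \<eta>)"
  have H: "{p. blk p \<noteq> 0 \<and> blk p \<le> i} = {p. pos p \<le> k i}" if i: "1 \<le> i" "i \<le> t" for i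
  proof (intro set_eqI iffI)
    fix p assume "p \<in> {p. blk p \<noteq> 0 \<and> blk p \<le> i}"
    then have b: "blk p \<noteq> 0" "blk p \<le> i" by auto
    then have pt: "pos p \<le> k t" by (cases "pos p \<le> k t") (auto simp: blk_def)
    then have ex: "\<exists>j. 1 \<le> j \<and> pos p \<le> k j" using i by (intro exI[of _ t]) auto
    have "1 \<le> blk p \<and> pos p \<le> k (blk p)"
      unfolding blk_def using pt LeastI_ex[OF ex] by simp
    then have "pos p \<le> k i" using km[of "blk p" i] b i by simp
    then show "p \<in> {p. pos p \<le> k i}" by simp
  next
    fix p assume "p \<in> {p. pos p \<le> k i}"
    then have pi: "pos p \<le> k i" by simp
    then have pt: "pos p \<le> k t" using km[of i t] i by simp
    have ex: "1 \<le> i \<and> pos p \<le> k i" using pi i by simp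
    have "1 \<le> blk p" unfolding blk_def using pt LeastI[of "\<lambda>j. 1 \<le> j \<and> pos p \<le> k j", OF ex] by simp
    moreover have "blk p \<le> i" unfolding blk_def using pt Least_le[of "\<lambda>j. 1 \<le> j \<and> pos p \<le> k j", OF ex] by simp
    ultimately show "p \<in> {p. blk p \<noteq> 0 \<and> blk p \<le> i}" by simp
  qed
  have cP: "card {p. pos p \<le> k i} = Suc (k i)" if "i \<le> t" for i
    using card_prefix[OF pos] km[OF that order.refl] assms(5) by simp
  show ?thesis
  proof (intro exI[of _ A] ballI allI impI)
    fix i S assume i: "i \<in> {1..t}" and cS: "card (S :: 'n set) = k i"
    have i1: "1 \<le> i" and it: "i \<le> t" using i by auto
    have cH: "card {p. blk p \<noteq> 0 \<and> blk p \<le> i} = Suc (k i)" using H[OF i1 it] cP[OF it] by simp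
    have G: "{p. blk p \<noteq> 0} = {p. blk p \<noteq> 0 \<and> blk p \<le> t}"
    proof -
      have "blk p \<le> t" if "blk p \<noteq> 0" for p
      proof -
        have pt: "pos p \<le> k t" using that by (cases "pos p \<le> k t") (auto simp: blk_def)
        have t1: "1 \<le> t" using i by auto
        show ?thesis unfolding blk_def using pt Least_le[of "\<lambda>j. 1 \<le> j \<and> pos p \<le> k j" t] t1 by simp
      qed
      then show ?thesis by auto
    qed
    have cG: "k i < card {p. blk p \<noteq> 0}"
      unfolding G using H[of t] cP[of t] km[OF it order.refl] i1 it by simp
    have kl: "k (i - 1) < k i" using kms[of "i - 1" i] i1 it by simp
    have sub: "{p. blk p \<noteq> 0 \<and> blk p \<le> i - 1} \<subseteq> {p. pos p \<le> k (i - 1)}"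
    proof (cases "i = 1")
      case True then show ?thesis by auto
    next
      case False then show ?thesis using H[of "i - 1"] i1 it by simp
    qed
    have bi: "{p. blk p = i} = {p. blk p \<noteq> 0 \<and> blk p \<le> i} - {p. blk p \<noteq> 0 \<and> blk p \<le> i - 1}"
      using i1 by auto
    have "card {p. blk p \<noteq> 0 \<and> blk p \<le> i} - card {p. blk p \<noteq> 0 \<and> blk p \<le> i - 1} \<le> card {p. blk p = i}"
      unfolding bi by (rule diff_card_le_card_Diff) simp
    moreover have "card {p. blk p \<noteq> 0 \<and> blk p \<le> i - 1} \<le> Suc (k (i - 1))"
      using card_mono[OF _ sub] cP[of "i - 1"] it by simp
    ultimately have bsi: "k i - k (i - 1) \<le> bs blk i" unfolding bs_def using cH by simp
    have "card {p. blk p = i} > 0" using bsi kl unfolding bs_def by linarith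
    then obtain p0 where p0: "blk p0 = i" by (auto simp: card_gt_0_iff)
    have Dbs: "real (k i) - real (k (i - 1)) \<le> real (bs blk i)"
    proof -
      have "real (k i - k (i - 1)) \<le> real (bs blk i)" using bsi by (simp only: of_nat_le_iff)
      moreover have "real (k i - k (i - 1)) = real (k i) - real (k (i - 1))" using kl by (simp add: of_nat_diff)
      ultimately show ?thesis by simp
    qed
    have Dn: "real (k i) - real (k (i - 1)) \<le> real CARD('n)"
    proof -
      have "k i \<le> k t" using km[OF it order.refl] .
      then have "k i \<le> CARD('n)" using assms(5) by linarith
      then have "real (k i) \<le> real CARD('n)" by (simp only: of_nat_le_iff)
      moreover have "0 \<le> real (k (i - 1))" by simp
      ultimately show ?thesis by linarith
    qed
    show "(1 - \<delta>) * (real (k i) - real (k (i - 1))) \<le> Er A S / OPT A (k i)"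
      unfolding A_def
      by (rule level[OF inj assms(1,2) \<eta>_def q_def i1 cH cS cG Dbs Dn p0])
  qed
qed

end
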